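(* Let ALG be an online algorithm for the online stochastic rewards problem and OPT a deterministic optimal fully offline policy. Suppose non-negative numbers $\lambda^\omega_t$ ($t\in T$) and $\theta^\omega_i$ ($i\in I$), defined for every sample path $\omega$, and constants $\alpha,\beta>0$ satisfy $$E_{\omega_i}\Big[\theta^\omega_i+\sum_{t:\,O^\omega_t=i}\lambda^\omega_t\,\Big|\,\omega_{-i}\Big]\ \ge\ \alpha\,E_{\omega_i}\big[\mathrm{OPT}^\omega_i\,\big|\,\omega_{-i}\big]\quad\text{for all } i\in I\text{ and all }\omega_{-i},$$ $$\beta\,\mathrm{ALG}\ \ge\ \sum_iE_\omega[\theta^\omega_i]+\sum_tE_\omega[\lambda^\omega_t].$$ Then $\mathrm{ALG}\ge\frac{\alpha}{\beta}\mathrm{OPT}$.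
   Context: Online stochastic rewards problem: bipartite graph $G=(I,T,E)$, resources $i\in I$ with rewards $r_i>0$ and unit capacity, arrivals $t\in T$ with edge probabilities $p_{it}$; each arrival is offered at most one available neighbour; an offer succeeds independently with probability $p_{it}$, earning $r_i$ and making $i$ unavailable. A fully offline policy knows the instance in advance, may adaptively choose the order in which to process arrivals, offers each arrival at most one available resource, and learns each outcome only after the offer. A sample path $\omega$ fixes an outcome $\mathbb{1}^\omega(i,t)\in\{0,1\}$ (independent Bernoulli($p_{it}$)) for every edge, and both ALG and OPT are run on the same $\omega$ (an offer of $i$ to $t$ succeeds iff $\mathbb{1}^\omega(i,t)=1$). $\omega_i$ denotes the outcomes of edges incident to $i$, $\omega_{-i}$ the outcomes of all other edges; $E_{\omega_i}[\cdot\mid\omega_{-i}]$ averages over $\omega_i$ only. $O^\omega_t$ is the resource offered to $t$ by OPT on $\omega$ ($\emptyset$ if none). $\mathrm{OPT}^\omega_i=r_i$ if OPT successfully matches $i$ on $\omega$ and $0$ otherwise. ALG and OPT also denote the respective expected total rewards. *)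

theory Defs
  imports "HOL-Probability.Probability"
begin

text \<open>Sample paths: one Bernoulli outcome per edge (edges outside E are fixed to False).\<close>
type_synonym ('i,'t) path = "'i \<times> 't \<Rightarrow> bool"

definition bern :: "('i \<Rightarrow> 't \<Rightarrow> real) \<Rightarrow> 'i \<times> 't \<Rightarrow> bool pmf" where
  "bern p = (\<lambda>(i,t). bernoulli_pmf (p i t))"

definition paths_pmf :: "('i \<times> 't) set \<Rightarrow> ('i \<Rightarrow> 't \<Rightarrow> real) \<Rightarrow> ('i,'t) path pmf" where
  "paths_pmf S p = Pi_pmf S False (bern p)"

definition incident :: "('i \<times> 't) set \<Rightarrow> 'i \<Rightarrow> ('i \<times> 't) set" where
  "incident E i = {e \<in> E. fst e = i}"

definition Exp :: "('i \<times> 't) set \<Rightarrow> ('i \<Rightarrow> 't \<Rightarrow> real) \<Rightarrow> (('i,'t) path \<Rightarrow> real) \<Rightarrow> real" where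
  "Exp E p f = measure_pmf.expectation (paths_pmf E p) f"

text \<open>E_{omega_i}[f | omega_{-i}]: average over the outcomes of the edges incident to i,
  the outcomes of all other edges being taken from omega.\<close>
definition cond_Exp :: "('i \<times> 't) set \<Rightarrow> ('i \<Rightarrow> 't \<Rightarrow> real) \<Rightarrow> 'i \<Rightarrow> (('i,'t) path \<Rightarrow> real)
    \<Rightarrow> ('i,'t) path \<Rightarrow> real" where
  "cond_Exp E p i f \<omega> = measure_pmf.expectation (paths_pmf (incident E i) p)
      (\<lambda>\<omega>'. f (\<lambda>e. if e \<in> incident E i then \<omega>' e else \<omega> e))"

text \<open>A history lists the processed arrivals
  in order, with the offered resource (None = no offer) and the outcome of the offer.
  Given the history, the policy either stops (None) or picks the next arrival and the offer.\<close>
type_synonym ('i,'t) history = "('t \<times> ('i option \<times> bool)) list"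
type_synonym ('i,'t) policy = "('i,'t) history \<Rightarrow> ('t \<times> 'i option) option"

definition available :: "('i,'t) history \<Rightarrow> 'i \<Rightarrow> bool" where
  "available h i \<longleftrightarrow> \<not> (\<exists>(t, oi, b) \<in> set h. oi = Some i \<and> b)"

definition valid_action :: "'t set \<Rightarrow> ('i \<times> 't) set \<Rightarrow> ('i,'t) history \<Rightarrow> 't \<Rightarrow> 'i option \<Rightarrow> bool" where
  "valid_action T E h t oi \<longleftrightarrow> t \<in> T \<and> t \<notin> fst ` set h \<and>
     (case oi of None \<Rightarrow> True | Some i \<Rightarrow> (i, t) \<in> E \<and> available h i)"

fun outcome :: "('i,'t) path \<Rightarrow> 't \<Rightarrow> 'i option \<Rightarrow> bool" where
  "outcome \<omega> t None = False"
| "outcome \<omega> t (Some i) = \<omega> (i, t)"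

fun run :: "'t set \<Rightarrow> ('i \<times> 't) set \<Rightarrow> ('i,'t) policy \<Rightarrow> ('i,'t) path \<Rightarrow> nat
    \<Rightarrow> ('i,'t) history \<Rightarrow> ('i,'t) history" where
  "run T E \<pi> \<omega> 0 h = h"
| "run T E \<pi> \<omega> (Suc n) h = (case \<pi> h of
      None \<Rightarrow> h
    | Some (t, oi) \<Rightarrow> if valid_action T E h t oi
                      then run T E \<pi> \<omega> n (h @ [(t, (oi, outcome \<omega> t oi))]) else h)"

definition final_history :: "'t set \<Rightarrow> ('i \<times> 't) set \<Rightarrow> ('i,'t) policy \<Rightarrow> ('i,'t) path \<Rightarrow> ('i,'t) history" where
  "final_history T E \<pi> \<omega> = run T E \<pi> \<omega> (card T) []"

definition offered :: "'t set \<Rightarrow> ('i \<times> 't) set \<Rightarrow> ('i,'t) policy \<Rightarrow> ('i,'t) path \<Rightarrow> 't \<Rightarrow> 'i option" where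
  "offered T E \<pi> \<omega> t = (case map_of (final_history T E \<pi> \<omega>) t of None \<Rightarrow> None | Some (oi, b) \<Rightarrow> oi)"

definition reward_i :: "'t set \<Rightarrow> ('i \<times> 't) set \<Rightarrow> ('i \<Rightarrow> real) \<Rightarrow> ('i,'t) policy \<Rightarrow> ('i,'t) path \<Rightarrow> 'i \<Rightarrow> real" where
  "reward_i T E r \<pi> \<omega> i = (if \<exists>t \<in> T. offered T E \<pi> \<omega> t = Some i \<and> \<omega> (i, t) then r i else 0)"

definition policy_value :: "'i set \<Rightarrow> 't set \<Rightarrow> ('i \<times> 't) set \<Rightarrow> ('i \<Rightarrow> real) \<Rightarrow> ('i \<Rightarrow> 't \<Rightarrow> real)
    \<Rightarrow> ('i,'t) policy \<Rightarrow> real" where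
  "policy_value I T E r p \<pi> = Exp E p (\<lambda>\<omega>. \<Sum>i\<in>I. reward_i T E r \<pi> \<omega> i)"

end

theory Submission
  imports Defs
begin


lemma fin_paths: "finite S \<Longrightarrow> finite (set_pmf (paths_pmf S p))"
  unfolding paths_pmf_def
  by (rule finite_subset[OF set_Pi_pmf_subset']) (auto intro!: finite_PiE_dflt)

lemma fub:
  fixes f :: "'a \<times> 'b \<Rightarrow> real"
  assumes "finite (set_pmf A)" "finite (set_pmf B)"
  shows "measure_pmf.expectation (pair_pmf A B) f =
         measure_pmf.expectation A (\<lambda>a. measure_pmf.expectation B (\<lambda>b. f (a, b)))"
proof -
  have "measure_pmf.expectation (pair_pmf A B) f =
        (\<Sum>x\<in>set_pmf A \<times> set_pmf B. pmf (pair_pmf A B) x *\<^sub>R f x)"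
    using assms by (intro integral_measure_pmf) auto
  also have "\<dots> = (\<Sum>a\<in>set_pmf A. \<Sum>b\<in>set_pmf B. pmf A a * (pmf B b * f (a, b)))"
    by (simp add: sum.cartesian_product case_prod_unfold mult.assoc, intro sum.cong) (auto simp: pmf_pair)
  also have "\<dots> = (\<Sum>a\<in>set_pmf A. pmf A a *\<^sub>R measure_pmf.expectation B (\<lambda>b. f (a, b)))"
    using assms by (simp add: integral_measure_pmf[of "set_pmf B"] sum_distrib_left)
  also have "\<dots> = measure_pmf.expectation A (\<lambda>a. measure_pmf.expectation B (\<lambda>b. f (a, b)))"
    using assms by (intro integral_measure_pmf[symmetric]) auto
  finally show ?thesis .
qed

lemma decomp:
  assumes "finite E"
  shows "Exp E p f = measure_pmf.expectation (paths_pmf (E - incident E i) p) (cond_Exp E p i f)"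
proof -
  define A where "A = incident E i"
  define B where "B = E - A"
  have AB: "E = A \<union> B" "A \<inter> B = {}" "finite A" "finite B"
    using assms by (auto simp: A_def B_def incident_def)
  have "paths_pmf E p = map_pmf (\<lambda>(f,g) x. if x \<in> A then f x else g x)
             (pair_pmf (paths_pmf A p) (paths_pmf B p))"
    unfolding paths_pmf_def using AB by (simp add: Pi_pmf_union)
  also have "\<dots> = map_pmf (\<lambda>(g,f) x. if x \<in> A then f x else g x)
             (pair_pmf (paths_pmf B p) (paths_pmf A p))"
    by (subst pair_commute_pmf) (simp add: pmf.map_comp o_def case_prod_unfold)
  finally have "Exp E p f = measure_pmf.expectation (pair_pmf (paths_pmf B p) (paths_pmf A p))
      (\<lambda>x. f ((\<lambda>(g,f) x. if x \<in> A then f x else g x) x))"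
    unfolding Exp_def by simp
  also have "\<dots> = measure_pmf.expectation (paths_pmf B p) (cond_Exp E p i f)"
    using AB(3,4) by (subst fub) (simp_all only: fin_paths cond_Exp_def[abs_def] A_def case_prod_conv)
  finally show ?thesis by (simp add: B_def A_def)
qed

theorem lemma5:
  fixes I :: "'i set" and T :: "'t set" and E :: "('i \<times> 't) set"
    and r :: "'i \<Rightarrow> real" and p :: "'i \<Rightarrow> 't \<Rightarrow> real"
    and OPT :: "('i,'t) policy" and ALG :: real
    and lam :: "('i,'t) path \<Rightarrow> 't \<Rightarrow> real" and theta :: "('i,'t) path \<Rightarrow> 'i \<Rightarrow> real"
    and \<alpha> \<beta> :: real
  assumes "finite I" "finite T" "E \<subseteq> I \<times> T"
    and "\<And>i. i \<in> I \<Longrightarrow> r i > 0"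
    and "\<And>i t. (i, t) \<in> E \<Longrightarrow> 0 \<le> p i t \<and> p i t \<le> 1"
    and OPT_optimal: "\<And>\<pi>. policy_value I T E r p \<pi> \<le> policy_value I T E r p OPT"
    and "\<And>\<omega> t. 0 \<le> lam \<omega> t" and "\<And>\<omega> i. 0 \<le> theta \<omega> i"
    and "\<alpha> > 0" and "\<beta> > 0"
    and cond1: "\<And>i \<omega>. i \<in> I \<Longrightarrow> \<omega> \<in> set_pmf (paths_pmf (E - incident E i) p) \<Longrightarrow>
        cond_Exp E p i (\<lambda>\<omega>. theta \<omega> i + (\<Sum>t\<in>{t\<in>T. offered T E OPT \<omega> t = Some i}. lam \<omega> t)) \<omega>
        \<ge> \<alpha> * cond_Exp E p i (\<lambda>\<omega>. reward_i T E r OPT \<omega> i) \<omega>"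
    and cond2: "\<beta> * ALG \<ge> (\<Sum>i\<in>I. Exp E p (\<lambda>\<omega>. theta \<omega> i)) + (\<Sum>t\<in>T. Exp E p (\<lambda>\<omega>. lam \<omega> t))"
  shows "ALG \<ge> \<alpha> / \<beta> * policy_value I T E r p OPT"
  proof -
  note fin = assms(1,2,3)
  have finE: "finite E" using fin by (meson finite_SigmaI finite_subset)
  have integ: "\<And>S (g::('i,'t) path \<Rightarrow> real). finite S \<Longrightarrow> integrable (measure_pmf (paths_pmf S p)) g"
    by (intro integrable_measure_pmf_finite fin_paths)
  define S where "S = (\<lambda>\<omega> i. \<Sum>t\<in>{t\<in>T. offered T E OPT \<omega> t = Some i}. lam \<omega> t)"
  have step1: "\<alpha> * Exp E p (\<lambda>\<omega>. reward_i T E r OPT \<omega> i) \<le> Exp E p (\<lambda>\<omega>. theta \<omega> i + S \<omega> i)"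
    if i: "i \<in> I" for i
  proof -
    let ?R = "paths_pmf (E - incident E i) p"
    have "\<alpha> * Exp E p (\<lambda>\<omega>. reward_i T E r OPT \<omega> i)
        = measure_pmf.expectation ?R (\<lambda>\<omega>. \<alpha> * cond_Exp E p i (\<lambda>\<omega>. reward_i T E r OPT \<omega> i) \<omega>)"
      by (simp add: decomp[OF finE, of p _ i])
    also have "\<dots> \<le> measure_pmf.expectation ?R (cond_Exp E p i (\<lambda>\<omega>. theta \<omega> i + S \<omega> i))"
      using finE cond1[OF i] unfolding S_def
      by (intro integral_mono_AE integ AE_pmfI) auto
    also have "\<dots> = Exp E p (\<lambda>\<omega>. theta \<omega> i + S \<omega> i)"
      by (simp add: decomp[OF finE, of p _ i])
    finally show ?thesis .
  qed
  have Sle: "(\<Sum>i\<in>I. S \<omega> i) \<le> (\<Sum>t\<in>T. lam \<omega> t)" for \<omega>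
  proof -
    have "(\<Sum>i\<in>I. S \<omega> i) = (\<Sum>i\<in>I. \<Sum>t\<in>T. if offered T E OPT \<omega> t = Some i then lam \<omega> t else 0)"
      unfolding S_def using fin by (simp add: sum.If_cases Int_def)
    also have "\<dots> = (\<Sum>t\<in>T. \<Sum>i\<in>I. if offered T E OPT \<omega> t = Some i then lam \<omega> t else 0)"
      by (rule sum.swap)
    also have "\<dots> \<le> (\<Sum>t\<in>T. lam \<omega> t)"
    proof (rule sum_mono)
      fix t
      show "(\<Sum>i\<in>I. if offered T E OPT \<omega> t = Some i then lam \<omega> t else 0) \<le> lam \<omega> t"
        using assms(7)[of \<omega> t] fin
        by (cases "offered T E OPT \<omega> t") (auto simp: sum.delta)
    qed
    finally show ?thesis .
  qed
  have "\<alpha> * policy_value I T E r p OPT = (\<Sum>i\<in>I. \<alpha> * Exp E p (\<lambda>\<omega>. reward_i T E r OPT \<omega> i))"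
  proof -
    have "(\<integral>\<omega>. (\<Sum>i\<in>I. reward_i T E r OPT \<omega> i) \<partial>measure_pmf (paths_pmf E p))
       = (\<Sum>i\<in>I. \<integral>\<omega>. reward_i T E r OPT \<omega> i \<partial>measure_pmf (paths_pmf E p))"
      by (rule Bochner_Integration.integral_sum) (rule integ[OF finE])
    then show ?thesis by (simp add: policy_value_def Exp_def sum_distrib_left[symmetric])
  qed
  also have "\<dots> \<le> (\<Sum>i\<in>I. Exp E p (\<lambda>\<omega>. theta \<omega> i + S \<omega> i))"
    by (intro sum_mono step1)
  also have "\<dots> = (\<Sum>i\<in>I. Exp E p (\<lambda>\<omega>. theta \<omega> i)) + Exp E p (\<lambda>\<omega>. \<Sum>i\<in>I. S \<omega> i)"
    unfolding Exp_def
    by (subst Bochner_Integration.integral_sum) (auto intro: integ[OF finE] simp: sum.distrib[symmetric] Bochner_Integration.integral_add[OF integ[OF finE] integ[OF finE]])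
  also have "Exp E p (\<lambda>\<omega>. \<Sum>i\<in>I. S \<omega> i) \<le> Exp E p (\<lambda>\<omega>. \<Sum>t\<in>T. lam \<omega> t)"
    unfolding Exp_def by (intro integral_mono integ[OF finE] Sle)
  also have "Exp E p (\<lambda>\<omega>. \<Sum>t\<in>T. lam \<omega> t) = (\<Sum>t\<in>T. Exp E p (\<lambda>\<omega>. lam \<omega> t))"
    unfolding Exp_def by (subst Bochner_Integration.integral_sum) (auto intro: integ[OF finE])
  finally have "\<alpha> * policy_value I T E r p OPT \<le> \<beta> * ALG" using cond2 by linarith
  then show ?thesis using assms(10)
    by (simp add: field_simps)
qed

end
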